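(* Let $\mathcal{X} \subseteq \mathbb{R}^m$ be countable and let $\widehat\nu = \sum_{j=1}^N \widehat\nu_j \delta_{\widehat x_j}$ be a probability mass function supported on $N$ distinct points $\widehat x_1,\dots,\widehat x_N \in \mathcal{X}$ with $\widehat\nu_j > 0$ and $\sum_j \widehat\nu_j = 1$. For $\varepsilon \ge 0$ let $\mathbb{B}_{\mathrm{KL}}(\widehat\nu,\varepsilon) = \{\nu \in \mathcal{M}(\mathcal{X}) : \mathrm{KL}(\widehat\nu \parallel \nu) \le \varepsilon\}$. Then for any $\varepsilon \ge 0$ and $x \in \mathcal{X}$: (i) if $x \in \mathrm{supp}(\widehat\nu)$, then $$\sup_{\nu \in \mathbb{B}_{\mathrm{KL}}(\widehat\nu,\varepsilon)} \nu(x) = \max\Big\{ \sum_{j=1}^N y_j \mathbb{1}_x(\widehat x_j) : y \in \mathbb{R}^N_{++},\ \sum_{j=1}^N \widehat\nu_j \log(\widehat\nu_j / y_j) \le \varepsilon,\ e^\top y = 1 \Big\},$$ which is a finite convex optimization problem, where $e$ is the all-ones vector; (ii) if $x \notin \mathrm{supp}(\widehat\nu)$, then $\sup_{\nu \in \mathbb{B}_{\mathrm{KL}}(\widehat\nu,\varepsilon)} \nu(x) = 1 - \exp(-\varepsilon)$.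
   Context: $\mathcal{M}(\mathcal{X})$ is the set of probability mass functions supported on $\mathcal{X}$; $\delta_z$ is the Dirac measure at $z$; $\mathbb{R}^N_{++}$ is the set of vectors with strictly positive entries; $\mathbb{1}_x(\xi) = 1$ if $\xi = x$ and $0$ otherwise. For $\nu_1 \ll \nu_2$, $\mathrm{KL}(\nu_1 \parallel \nu_2) = \sum_{z \in \mathcal{X}} f(\nu_1(z)/\nu_2(z))\,\nu_2(z)$ with $f(t) = t\log t - t + 1$. *)

theory Defs
  imports "HOL-Analysis.Analysis" "HOL-Probability.Probability"
begin

text \<open>The convex function f(t) = t log t - t + 1 (with 0 log 0 = 0).\<close>
definition kl_f :: "real \<Rightarrow> real" where
  "kl_f t = t * ln t - t + 1"

definition pmfs_on :: "'a set \<Rightarrow> 'a pmf set" where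
  "pmfs_on X = {\<nu>. set_pmf \<nu> \<subseteq> X}"

definition KL :: "'a set \<Rightarrow> 'a pmf \<Rightarrow> 'a pmf \<Rightarrow> ennreal" where
  "KL X \<nu>1 \<nu>2 =
     (if set_pmf \<nu>1 \<subseteq> set_pmf \<nu>2
      then (\<integral>\<^sup>+ z. ennreal (kl_f (pmf \<nu>1 z / pmf \<nu>2 z) * pmf \<nu>2 z) \<partial>count_space X)
      else \<infinity>)"

definition KL_ball :: "'a set \<Rightarrow> 'a pmf \<Rightarrow> real \<Rightarrow> 'a pmf set" where
  "KL_ball X \<nu>h \<epsilon> = {\<nu> \<in> pmfs_on X. KL X \<nu>h \<nu> \<le> ennreal \<epsilon>}"

end

theory Submission imports Defs begin

lemma sum_sel:
  assumes "inj_on xh {..<(N::nat)}" "j < N"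
  shows "(\<Sum>i<N. if xh i = xh j then a i else (0::real)) = a j"
proof -
  have "(\<Sum>i<N. if xh i = xh j then a i else 0) = (\<Sum>i\<in>{j}. a i)"
    by (rule sum.mono_neutral_cong_right) (use assms in \<open>auto simp: inj_on_def\<close>)
  then show ?thesis by simp
qed

lemma sum_sel0:
  assumes "z \<notin> xh ` {..<(N::nat)}"
  shows "(\<Sum>i<N. if xh i = z then a i else (0::real)) = 0"
  using assms by (intro sum.neutral) auto

lemma sum_sel_img:
  assumes "inj_on xh {..<(N::nat)}"
  shows "(\<Sum>z\<in>xh ` {..<N}. g z) = (\<Sum>j<N. g (xh j))"
  using assms by (simp add: sum.reindex)

lemma sum_ind:
  assumes "inj_on xh {..<(N::nat)}" "k < N"
  shows "(\<Sum>j<N. y j * (if xh j = xh k then 1 else (0::real))) = y k"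
  using sum_sel[OF assms, of y] by (simp add: if_distrib cong: if_cong)

lemma log_sum:
  fixes w y :: "'a \<Rightarrow> real"
  assumes "finite J" "J \<noteq> {}" "\<And>j. j \<in> J \<Longrightarrow> w j > 0" "\<And>j. j \<in> J \<Longrightarrow> y j > 0"
  shows "(\<Sum>j\<in>J. w j) * ln ((\<Sum>j\<in>J. w j) / (\<Sum>j\<in>J. y j)) \<le> (\<Sum>j\<in>J. w j * ln (w j / y j))"
proof -
  define W where "W = (\<Sum>j\<in>J. w j)"
  define Y where "Y = (\<Sum>j\<in>J. y j)"
  have W: "W > 0" unfolding W_def using assms by (intro sum_pos) auto
  have Y: "Y > 0" unfolding Y_def using assms by (intro sum_pos) auto
  have tm: "w j * ln (w j / y j) - w j * ln (W / Y) \<ge> w j - y j * W / Y" if j: "j \<in> J" for j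
  proof -
    have wj: "w j > 0" and yj: "y j > 0" using assms j by auto
    have "ln (y j * W / (w j * Y)) \<le> y j * W / (w j * Y) - 1"
      using wj yj W Y by (intro ln_le_minus_one) simp
    moreover have "ln (y j * W / (w j * Y)) = ln (W / Y) - ln (w j / y j)"
      using wj yj W Y by (simp add: ln_div ln_mult)
    ultimately have "ln (w j / y j) - ln (W / Y) \<ge> 1 - y j * W / (w j * Y)" by linarith
    from mult_left_mono[OF this less_imp_le[OF wj]]
    show ?thesis using wj by (simp add: algebra_simps)
  qed
  have "(\<Sum>j\<in>J. w j - y j * W / Y) \<le> (\<Sum>j\<in>J. w j * ln (w j / y j) - w j * ln (W / Y))"
    using tm by (intro sum_mono) auto
  moreover have "(\<Sum>j\<in>J. w j - y j * W / Y) = 0"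
    using Y by (simp add: sum_subtractf sum_divide_distrib[symmetric] sum_distrib_right[symmetric] W_def Y_def)
  moreover have "(\<Sum>j\<in>J. w j * ln (w j / y j) - w j * ln (W / Y)) = (\<Sum>j\<in>J. w j * ln (w j / y j)) - W * ln (W / Y)"
    by (simp add: sum_subtractf sum_distrib_right W_def)
  ultimately show ?thesis unfolding W_def Y_def by linarith
qed

lemma finite_pmf_exists:
  fixes q :: "'a \<Rightarrow> real"
  assumes "finite A" "\<And>z. z \<in> A \<Longrightarrow> q z \<ge> 0" "sum q A = 1"
  shows "\<exists>\<nu>. \<forall>z. pmf \<nu> z = (if z \<in> A then q z else 0)"
proof -
  define f where "f z = (if z \<in> A then q z else 0)" for z
  have nn: "\<And>z. 0 \<le> f z" using assms(2) by (simp add: f_def)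
  have "(\<integral>\<^sup>+z. ennreal (f z) \<partial>count_space UNIV) = (\<Sum>z\<in>A. ennreal (f z))"
    by (rule nn_integral_count_space') (use assms in \<open>auto simp: f_def\<close>)
  also have "\<dots> = ennreal (\<Sum>z\<in>A. f z)" using nn by (simp add: sum_ennreal)
  also have "(\<Sum>z\<in>A. f z) = 1" using assms(3) by (simp add: f_def)
  finally have prob: "(\<integral>\<^sup>+z. ennreal (f z) \<partial>count_space UNIV) = 1" by simp
  show ?thesis
    by (rule exI[of _ "embed_pmf f"]) (simp add: pmf_embed_pmf[OF nn prob] f_def)
qed


lemma kl_f_nonneg: "t \<ge> 0 \<Longrightarrow> kl_f t \<ge> 0"
proof (cases "t = 0")
  case True then show ?thesis by (simp add: kl_f_def)
next
  case False
  assume "t \<ge> 0"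
  then have t: "t > 0" using False by simp
  have "ln (1/t) \<le> 1/t - 1" using t by (intro ln_le_minus_one) simp
  then have "- ln t \<le> 1/t - 1" using t by (simp add: ln_div)
  from mult_left_mono[OF this less_imp_le[OF t]]
  show ?thesis using t by (simp add: kl_f_def algebra_simps)
qed

lemma setpmf_nuh:
  assumes inj: "inj_on xh {..<(N::nat)}" and w_pos: "\<And>j. j < N \<Longrightarrow> w j > (0::real)"
    and nd: "\<And>z. pmf \<nu>h z = (\<Sum>j<N. if xh j = z then w j else 0)"
  shows "set_pmf \<nu>h = xh ` {..<N}" and "\<And>j. j < N \<Longrightarrow> pmf \<nu>h (xh j) = w j"
proof -
  show pj: "\<And>j. j < N \<Longrightarrow> pmf \<nu>h (xh j) = w j" using nd sum_sel[OF inj] by simp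
  show "set_pmf \<nu>h = xh ` {..<N}"
  proof
    show "set_pmf \<nu>h \<subseteq> xh ` {..<N}"
    proof
      fix z assume "z \<in> set_pmf \<nu>h"
      then have "pmf \<nu>h z \<noteq> 0" by (simp add: set_pmf_iff)
      then show "z \<in> xh ` {..<N}" using nd[of z] sum_sel0[of z xh N w] by auto
    qed
    show "xh ` {..<N} \<subseteq> set_pmf \<nu>h" using pj w_pos by (auto simp: set_pmf_iff) (metis less_irrefl)
  qed
qed

lemma KL_eval:
  assumes inj: "inj_on xh {..<(N::nat)}" and w_pos: "\<And>j. j < N \<Longrightarrow> w j > (0::real)"
    and w_sum: "(\<Sum>j<N. w j) = 1"
    and nd: "\<And>z. pmf \<nu>h z = (\<Sum>j<N. if xh j = z then w j else 0)"
    and xh_in: "\<And>j. j < N \<Longrightarrow> xh j \<in> X"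
    and sX: "set_pmf \<nu> \<subseteq> X" and pos: "\<And>j. j < N \<Longrightarrow> pmf \<nu> (xh j) > 0"
  shows "KL X \<nu>h \<nu> = ennreal (\<Sum>j<N. w j * ln (w j / pmf \<nu> (xh j)))"
proof -
  define S where "S = xh ` {..<N}"
  have sS: "set_pmf \<nu>h = S" and pw: "\<And>j. j < N \<Longrightarrow> pmf \<nu>h (xh j) = w j"
    using setpmf_nuh[OF inj w_pos nd] by (auto simp: S_def)
  have SX: "S \<subseteq> X" using xh_in by (auto simp: S_def)
  have finS: "finite S" by (simp add: S_def)
  have mS: "(\<Sum>z\<in>S. pmf \<nu> z) \<le> 1"
    using measure_measure_pmf_finite[OF finS, of \<nu>] measure_pmf.prob_le_1[of \<nu> S] by simp
  have sub: "set_pmf \<nu>h \<subseteq> set_pmf \<nu>" using pos by (auto simp: sS S_def set_pmf_iff) (metis less_irrefl)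
  define h where "h z = kl_f (pmf \<nu>h z / pmf \<nu> z) * pmf \<nu> z" for z
  have hnn: "h z \<ge> 0" for z unfolding h_def by (intro mult_nonneg_nonneg kl_f_nonneg) auto
  have "KL X \<nu>h \<nu> = (\<integral>\<^sup>+ z. ennreal (h z) \<partial>count_space X)"
    using sub by (simp add: KL_def h_def)
  also have "\<dots> = (\<integral>\<^sup>+ z. ennreal (if z \<in> S then h z else 0) + ennreal (pmf \<nu> z) * indicator (X - S) z \<partial>count_space X)"
  proof (rule nn_integral_cong)
    fix z assume "z \<in> space (count_space X)"
    then have zX: "z \<in> X" by simp
    show "ennreal (h z) = ennreal (if z \<in> S then h z else 0) + ennreal (pmf \<nu> z) * indicator (X - S) z"
    proof (cases "z \<in> S")
      case True then show ?thesis by simp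
    next
      case False
      then have "pmf \<nu>h z = 0" using sS by (metis set_pmf_iff)
      then show ?thesis using False zX by (simp add: h_def kl_f_def)
    qed
  qed
  also have "\<dots> = (\<integral>\<^sup>+ z. ennreal (if z \<in> S then h z else 0) \<partial>count_space X) + (\<integral>\<^sup>+ z. ennreal (pmf \<nu> z) * indicator (X - S) z \<partial>count_space X)"
    by (rule nn_integral_add) auto
  also have "(\<integral>\<^sup>+ z. ennreal (if z \<in> S then h z else 0) \<partial>count_space X) = (\<Sum>z\<in>S. ennreal (if z \<in> S then h z else 0))"
    by (rule nn_integral_count_space'[OF finS _ SX]) auto
  also have "\<dots> = ennreal (\<Sum>z\<in>S. h z)" using hnn by (simp add: sum_ennreal)
  also have "(\<integral>\<^sup>+ z. ennreal (pmf \<nu> z) * indicator (X - S) z \<partial>count_space X) = (\<integral>\<^sup>+ z. ennreal (pmf \<nu> z) \<partial>count_space (X - S))"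
    by (simp add: nn_integral_count_space_indicator indicator_inter_arith[symmetric] Int_absorb2[OF Diff_subset] mult.assoc)
  also have "\<dots> = emeasure (measure_pmf \<nu>) (X - S)" by (rule nn_integral_pmf)
  also have "\<dots> = ennreal (measure (measure_pmf \<nu>) (X - S))" by (simp add: measure_pmf.emeasure_eq_measure)
  also have "measure (measure_pmf \<nu>) (X - S) = measure (measure_pmf \<nu>) X - measure (measure_pmf \<nu>) S"
    using SX by (simp add: measure_pmf.finite_measure_Diff)
  also have "measure (measure_pmf \<nu>) X = 1" using sX by (simp add: measure_pmf.prob_eq_1 AE_measure_pmf_iff subset_eq)
  also have "measure (measure_pmf \<nu>) S = (\<Sum>z\<in>S. pmf \<nu> z)" using finS by (rule measure_measure_pmf_finite)
  finally have "KL X \<nu>h \<nu> = ennreal (\<Sum>z\<in>S. h z) + ennreal (1 - (\<Sum>z\<in>S. pmf \<nu> z))" .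
  also have "\<dots> = ennreal ((\<Sum>z\<in>S. h z) + (1 - (\<Sum>z\<in>S. pmf \<nu> z)))"
    using hnn mS by (intro ennreal_plus[symmetric] sum_nonneg) auto
  also have "(\<Sum>z\<in>S. h z) + (1 - (\<Sum>z\<in>S. pmf \<nu> z)) = (\<Sum>j<N. w j * ln (w j / pmf \<nu> (xh j)))"
  proof -
    have "(\<Sum>z\<in>S. h z) = (\<Sum>j<N. h (xh j))" unfolding S_def by (rule sum_sel_img[OF inj])
    also have "\<dots> = (\<Sum>j<N. w j * ln (w j / pmf \<nu> (xh j)) - w j + pmf \<nu> (xh j))"
    proof (rule sum.cong[OF refl])
      fix j assume j: "j \<in> {..<N}"
      have p: "pmf \<nu> (xh j) > 0" "w j > 0" using j pos w_pos by auto
      show "h (xh j) = w j * ln (w j / pmf \<nu> (xh j)) - w j + pmf \<nu> (xh j)"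
        using p pw[of j] j by (simp add: h_def kl_f_def field_simps)
    qed
    also have "\<dots> = (\<Sum>j<N. w j * ln (w j / pmf \<nu> (xh j))) - 1 + (\<Sum>j<N. pmf \<nu> (xh j))"
      by (simp add: sum.distrib sum_subtractf w_sum)
    finally show ?thesis using sum_sel_img[OF inj, of "pmf \<nu>"] by (simp add: S_def)
  qed
  finally show ?thesis .
qed


lemma ball_iff:
  assumes inj: "inj_on xh {..<(N::nat)}" and w_pos: "\<And>j. j < N \<Longrightarrow> w j > (0::real)"
    and w_sum: "(\<Sum>j<N. w j) = 1"
    and nd: "\<And>z. pmf \<nu>h z = (\<Sum>j<N. if xh j = z then w j else 0)"
    and xh_in: "\<And>j. j < N \<Longrightarrow> xh j \<in> X" and eps: "\<epsilon> \<ge> 0"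
  shows "\<nu> \<in> KL_ball X \<nu>h \<epsilon> \<longleftrightarrow> set_pmf \<nu> \<subseteq> X \<and> (\<forall>j<N. pmf \<nu> (xh j) > 0) \<and>
           (\<Sum>j<N. w j * ln (w j / pmf \<nu> (xh j))) \<le> \<epsilon>"
proof (cases "\<forall>j<N. pmf \<nu> (xh j) > 0")
  case True
  show ?thesis
  proof (cases "set_pmf \<nu> \<subseteq> X")
    case True2: True
    show ?thesis using KL_eval[OF inj w_pos w_sum nd xh_in True2] True eps
      by (simp add: KL_ball_def pmfs_on_def True2 ennreal_le_iff)
  qed (simp add: KL_ball_def pmfs_on_def)
next
  case False
  then obtain j where j: "j < N" "pmf \<nu> (xh j) = 0" using pmf_nonneg[of \<nu>] by (metis less_eq_real_def)
  have "xh j \<in> set_pmf \<nu>h" using setpmf_nuh[OF inj w_pos nd] j by auto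
  moreover have "xh j \<notin> set_pmf \<nu>" using j by (simp add: set_pmf_iff)
  ultimately have "KL X \<nu>h \<nu> = \<infinity>" by (auto simp: KL_def)
  then have "\<not> KL X \<nu>h \<nu> \<le> ennreal \<epsilon>" by (simp add: top_unique)
  then show ?thesis using False by (simp add: KL_ball_def)
qed

lemma sum_pts_le:
  assumes inj: "inj_on xh {..<(N::nat)}"
  shows "(\<Sum>j<N. pmf \<nu> (xh j)) \<le> 1"
    and "x \<notin> xh ` {..<N} \<Longrightarrow> pmf \<nu> x + (\<Sum>j<N. pmf \<nu> (xh j)) \<le> 1"
proof -
  have e: "(\<Sum>j<N. pmf \<nu> (xh j)) = (\<Sum>z\<in>xh ` {..<N}. pmf \<nu> z)" using sum_sel_img[OF inj, of "pmf \<nu>"] by simp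
  show "(\<Sum>j<N. pmf \<nu> (xh j)) \<le> 1" unfolding e
    using measure_measure_pmf_finite[of "xh ` {..<N}" \<nu>] measure_pmf.prob_le_1[of \<nu> "xh ` {..<N}"] by simp
  assume x: "x \<notin> xh ` {..<N}"
  have "(\<Sum>z\<in>insert x (xh ` {..<N}). pmf \<nu> z) \<le> 1"
    using measure_measure_pmf_finite[of "insert x (xh ` {..<N})" \<nu>] measure_pmf.prob_le_1[of \<nu> "insert x (xh ` {..<N})"] by simp
  then show "pmf \<nu> x + (\<Sum>j<N. pmf \<nu> (xh j)) \<le> 1" unfolding e using x by simp
qed


definition feas :: "nat \<Rightarrow> (nat \<Rightarrow> real) \<Rightarrow> real \<Rightarrow> (nat \<Rightarrow> real) \<Rightarrow> bool" where
  "feas N w \<epsilon> y \<longleftrightarrow> (\<forall>j<N. y j > 0) \<and> (\<Sum>j<N. w j * ln (w j / y j)) \<le> \<epsilon> \<and> (\<Sum>j<N. y j) = 1"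

lemma exists_max:
  assumes k: "k < N" and w_pos: "\<And>j. j < N \<Longrightarrow> w j > (0::real)"
    and w_sum: "(\<Sum>j<N. w j) = 1" and eps: "\<epsilon> \<ge> 0"
  shows "\<exists>y. feas N w \<epsilon> y \<and> (\<forall>y'. feas N w \<epsilon> y' \<longrightarrow> y' k \<le> y k)"
proof (cases "N = 1")
  case True
  then have k0: "k = 0" using k by simp
  have w0: "w 0 = 1" using w_sum True by simp
  have "feas N w \<epsilon> (\<lambda>_. 1)" using True w0 eps by (simp add: feas_def)
  moreover have "y' k \<le> 1" if "feas N w \<epsilon> y'" for y' using that True k0 by (simp add: feas_def)
  ultimately show ?thesis by blast
next
  case False
  define J where "J = {..<N} - {k}"
  have finJ: "finite J" by (simp add: J_def)
  have Jne: "J \<noteq> {}"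
  proof
    assume "J = {}"
    then have "{..<N} \<subseteq> {k}" by (auto simp: J_def)
    then have "card {..<N} \<le> card {k}" by (intro card_mono) auto
    then show False using False k by simp
  qed
  have splitsum: "(\<Sum>j<N. f j) = f k + (\<Sum>j\<in>J. f j)" for f :: "nat \<Rightarrow> real"
    unfolding J_def using k by (simp add: sum.remove)
  define W where "W = (\<Sum>j\<in>J. w j)"
  have Wpos: "W > 0" unfolding W_def using Jne finJ w_pos by (intro sum_pos) (auto simp: J_def)
  have Wk: "W = 1 - w k" using splitsum[of w] w_sum by (simp add: W_def)
  have wk: "w k > 0" "w k < 1" using w_pos k Wpos Wk by auto
  define g where "g t = w k * ln (w k / t) + W * ln (W / (1 - t))" for t
  have A: "0 < y' k \<and> y' k < 1 \<and> g (y' k) \<le> \<epsilon>" if f: "feas N w \<epsilon> y'" for y'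
  proof -
    have yp: "\<And>j. j < N \<Longrightarrow> y' j > 0" and le: "(\<Sum>j<N. w j * ln (w j / y' j)) \<le> \<epsilon>"
      and s1: "(\<Sum>j<N. y' j) = 1" using f by (auto simp: feas_def)
    have Ypos: "(\<Sum>j\<in>J. y' j) > 0" using Jne finJ yp by (intro sum_pos) (auto simp: J_def)
    have Y: "(\<Sum>j\<in>J. y' j) = 1 - y' k" using splitsum[of y'] s1 by simp
    have ls: "W * ln (W / (\<Sum>j\<in>J. y' j)) \<le> (\<Sum>j\<in>J. w j * ln (w j / y' j))"
      unfolding W_def using finJ Jne w_pos yp by (intro log_sum) (auto simp: J_def)
    have "g (y' k) \<le> (\<Sum>j<N. w j * ln (w j / y' j))"
      using ls Y splitsum[of "\<lambda>j. w j * ln (w j / y' j)"] by (simp add: g_def)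
    then show ?thesis using le yp[OF k] Ypos Y by simp
  qed
  define yt where "yt t j = (if j = k then t else (1 - t) * w j / W)" for t j
  have B: "feas N w \<epsilon> (yt t)" if t: "0 < t" "t < 1" "g t \<le> \<epsilon>" for t
  proof -
    have pos: "\<forall>j<N. yt t j > 0" using t w_pos Wpos by (auto simp: yt_def)
    have "(\<Sum>j\<in>J. yt t j) = (\<Sum>j\<in>J. (1 - t) / W * w j)"
      by (intro sum.cong) (auto simp: yt_def J_def)
    also have "\<dots> = (1 - t) / W * W" by (simp only: sum_distrib_left[symmetric] W_def)
    also have "\<dots> = 1 - t" using Wpos by simp
    finally have s: "(\<Sum>j<N. yt t j) = 1" using splitsum[of "yt t"] by (simp add: yt_def)
    have "(\<Sum>j\<in>J. w j * ln (w j / yt t j)) = (\<Sum>j\<in>J. w j * ln (W / (1 - t)))"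
    proof (intro sum.cong refl)
      fix j assume j: "j \<in> J"
      then have "j \<noteq> k" "w j > 0" using w_pos by (auto simp: J_def)
      then show "w j * ln (w j / yt t j) = w j * ln (W / (1 - t))"
        using t Wpos by (simp add: yt_def field_simps)
    qed
    also have "\<dots> = W * ln (W / (1 - t))" by (simp add: W_def sum_distrib_right)
    finally have "(\<Sum>j<N. w j * ln (w j / yt t j)) = g t"
      using splitsum[of "\<lambda>j. w j * ln (w j / yt t j)"] by (simp add: g_def yt_def)
    then show ?thesis using pos s t by (simp add: feas_def)
  qed
  have C: "\<exists>ts. 0 < ts \<and> ts < 1 \<and> g ts \<le> \<epsilon> \<and> (\<forall>t. 0 < t \<and> t < 1 \<and> g t \<le> \<epsilon> \<longrightarrow> t \<le> ts)"
  proof -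
    define c where "c = \<epsilon> - w k * ln (w k)"
    have lnwk: "ln (w k) \<le> 0" using wk by simp
    have c0: "c \<ge> 0" unfolding c_def using eps mult_nonneg_nonpos[of "w k" "ln (w k)"] lnwk wk by simp
    define \<delta> where "\<delta> = W * exp (- (c / W) - 1)"
    have dpos: "\<delta> > 0" using Wpos by (simp add: \<delta>_def)
    have "c / W \<ge> 0" using c0 Wpos by simp
    then have "exp (- (c / W) - 1) < 1" by simp
    then have dW: "\<delta> < W" using Wpos by (simp add: \<delta>_def)
    have lnd: "ln (W / \<delta>) = c / W + 1" using Wpos
      by (simp add: \<delta>_def ln_div ln_mult)
    define b where "b = 1 - \<delta>"
    have wkb: "w k < b" "b < 1" using dW dpos Wk by (auto simp: b_def)
    define K where "K = {w k..b} \<inter> g -` {..\<epsilon>}"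
    have cont: "continuous_on {w k..b} g"
      unfolding g_def using wk wkb Wpos by (intro continuous_intros) auto
    have "closed K" unfolding K_def by (intro continuous_closed_preimage cont) auto
    moreover have "bounded K" unfolding K_def by (rule bounded_subset[OF compact_imp_bounded[OF compact_Icc]]) auto
    ultimately have cK: "compact K" by (simp add: compact_eq_bounded_closed)
    have gwk: "g (w k) = 0" using Wk by (simp add: g_def)
    have wkK: "w k \<in> K" using wkb eps gwk by (simp add: K_def)
    obtain ts where ts: "ts \<in> K" "\<And>t. t \<in> K \<Longrightarrow> t \<le> ts"
      using compact_attains_sup[OF cK] wkK by blast
    have big: "g t > \<epsilon>" if t: "b < t" "t < 1" for t
    proof -
      have t0: "t > 0" using t wkb wk by simp
      have "ln (w k / t) \<ge> ln (w k)" using t0 t wk by (simp add: ln_div)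
      then have a1: "w k * ln (w k / t) \<ge> w k * ln (w k)" using wk by simp
      have "1 - t < \<delta>" using t by (simp add: b_def)
      then have "W / \<delta> < W / (1 - t)" using t dpos Wpos by (intro divide_strict_left_mono) auto
      then have "ln (W / \<delta>) < ln (W / (1 - t))" using dpos Wpos t by simp
      then have a2: "W * ln (W / (1 - t)) > W * (c / W + 1)" using Wpos lnd by simp
      have "W * (c / W + 1) = c + W" using Wpos by (simp add: field_simps)
      then show ?thesis using a1 a2 Wpos by (simp add: g_def c_def)
    qed
    show ?thesis
    proof (intro exI[of _ ts] conjI allI impI)
      show "0 < ts" "ts < 1" "g ts \<le> \<epsilon>" using ts(1) wk wkb by (auto simp: K_def)
      fix t assume t: "0 < t \<and> t < 1 \<and> g t \<le> \<epsilon>"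
      show "t \<le> ts"
      proof (cases "t \<le> w k")
        case True then show ?thesis using ts(2)[OF wkK] by simp
      next
        case False
        then have "t \<le> b" using big t by force
        then have "t \<in> K" using False t by (simp add: K_def)
        then show ?thesis using ts(2) by simp
      qed
    qed
  qed
  then obtain ts where ts: "0 < ts" "ts < 1" "g ts \<le> \<epsilon>" "\<And>t. 0 < t \<and> t < 1 \<and> g t \<le> \<epsilon> \<Longrightarrow> t \<le> ts"
    by blast
  show ?thesis
  proof (intro exI[of _ "yt ts"] conjI allI impI)
    show "feas N w \<epsilon> (yt ts)" using B ts by simp
    fix y' assume "feas N w \<epsilon> y'"
    then show "y' k \<le> yt ts k" using A ts(4) by (simp add: yt_def)
  qed
qed

theorem mainTheorem3:
  fixes X :: "(real ^ 'm) set"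
    and N :: nat
    and xh :: "nat \<Rightarrow> real ^ 'm"
    and w :: "nat \<Rightarrow> real"
    and \<nu>h :: "(real ^ 'm) pmf"
    and \<epsilon> :: real
    and x :: "real ^ 'm"
  assumes countX: "countable X"
    and xh_in: "\<And>j. j < N \<Longrightarrow> xh j \<in> X"
    and xh_distinct: "inj_on xh {..<N}"
    and w_pos: "\<And>j. j < N \<Longrightarrow> w j > 0"
    and w_sum: "(\<Sum>j<N. w j) = 1"
    and \<nu>h_def: "\<And>z. pmf \<nu>h z = (\<Sum>j<N. if xh j = z then w j else 0)"
    and eps: "\<epsilon> \<ge> 0"
    and x_in: "x \<in> X"
  shows
    "(x \<in> set_pmf \<nu>h \<longrightarrow>
       (\<exists>y. (\<forall>j<N. y j > 0) \<and> (\<Sum>j<N. w j * ln (w j / y j)) \<le> \<epsilon> \<and> (\<Sum>j<N. y j) = 1 \<and>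
            (\<Sum>j<N. y j * (if xh j = x then 1 else 0)) = (SUP \<nu>\<in>KL_ball X \<nu>h \<epsilon>. pmf \<nu> x) \<and>
            (\<forall>y'. (\<forall>j<N. y' j > 0) \<and> (\<Sum>j<N. w j * ln (w j / y' j)) \<le> \<epsilon> \<and> (\<Sum>j<N. y' j) = 1
                 \<longrightarrow> (\<Sum>j<N. y' j * (if xh j = x then 1 else 0)) \<le> (\<Sum>j<N. y j * (if xh j = x then 1 else 0)))))
     \<and>
     (x \<notin> set_pmf \<nu>h \<longrightarrow>
       (SUP \<nu>\<in>KL_ball X \<nu>h \<epsilon>. pmf \<nu> x) = 1 - exp (- \<epsilon>))"
proof -
  have sS: "set_pmf \<nu>h = xh ` {..<N}" and pw: "\<And>j. j < N \<Longrightarrow> pmf \<nu>h (xh j) = w j"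
    using setpmf_nuh[OF xh_distinct w_pos \<nu>h_def] by auto
  note BI = ball_iff[OF xh_distinct w_pos w_sum \<nu>h_def xh_in eps]
  have Npos: "N > 0" using w_sum by (cases N) auto
  show ?thesis
  proof (intro conjI impI)
    assume "x \<in> set_pmf \<nu>h"
    then obtain k where k: "k < N" "x = xh k" using sS by auto
    obtain y where y: "feas N w \<epsilon> y" and ymax: "\<And>y'. feas N w \<epsilon> y' \<Longrightarrow> y' k \<le> y k"
      using exists_max[OF k(1) w_pos w_sum eps] by blast
    have ind: "\<And>y::nat\<Rightarrow>real. (\<Sum>j<N. y j * (if xh j = x then 1 else 0)) = y k"
      unfolding k(2) by (rule sum_ind[OF xh_distinct k(1)])
    have yp: "\<And>j. j < N \<Longrightarrow> y j > 0" and yF: "(\<Sum>j<N. w j * ln (w j / y j)) \<le> \<epsilon>"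
      and ys: "(\<Sum>j<N. y j) = 1" using y by (auto simp: feas_def)
    have SUPeq: "(SUP \<nu>\<in>KL_ball X \<nu>h \<epsilon>. pmf \<nu> x) = y k"
      unfolding image_def
    proof (rule cSup_eq_maximum)
      define q where "q z = (\<Sum>j<N. if xh j = z then y j else 0)" for z
      have "\<exists>\<nu>. \<forall>z. pmf \<nu> z = (if z \<in> xh ` {..<N} then q z else 0)"
      proof (rule finite_pmf_exists)
        show "\<And>z. z \<in> xh ` {..<N} \<Longrightarrow> 0 \<le> q z"
          unfolding q_def using yp by (intro sum_nonneg) (auto simp: less_imp_le)
        show "sum q (xh ` {..<N}) = 1"
          using sum_sel_img[OF xh_distinct, of q] sum_sel[OF xh_distinct, of _ y] ys
          by (simp add: q_def)
      qed simp
      then obtain \<nu>y where \<nu>y: "\<And>z. pmf \<nu>y z = (if z \<in> xh ` {..<N} then q z else 0)" by blast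
      have pj: "\<And>j. j < N \<Longrightarrow> pmf \<nu>y (xh j) = y j"
        using \<nu>y sum_sel[OF xh_distinct, of _ y] by (simp add: q_def)
      have "set_pmf \<nu>y \<subseteq> X"
      proof
        fix z assume "z \<in> set_pmf \<nu>y"
        then have "pmf \<nu>y z \<noteq> 0" by (simp add: set_pmf_iff)
        then have "z \<in> xh ` {..<N}" using \<nu>y[of z] by (auto split: if_splits)
        then show "z \<in> X" using xh_in by auto
      qed
      then have "\<nu>y \<in> KL_ball X \<nu>h \<epsilon>" using BI pj yp yF by simp
      moreover have "pmf \<nu>y x = y k" using pj k by simp
      ultimately show "y k \<in> {v. \<exists>\<nu>\<in>KL_ball X \<nu>h \<epsilon>. v = pmf \<nu> x}" by force
      fix v assume "v \<in> {v. \<exists>\<nu>\<in>KL_ball X \<nu>h \<epsilon>. v = pmf \<nu> x}"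
      then obtain \<nu> where \<nu>: "\<nu> \<in> KL_ball X \<nu>h \<epsilon>" "v = pmf \<nu> x" by blast
      have \<nu>p: "\<And>j. j < N \<Longrightarrow> pmf \<nu> (xh j) > 0" and \<nu>F: "(\<Sum>j<N. w j * ln (w j / pmf \<nu> (xh j))) \<le> \<epsilon>"
        using \<nu>(1) BI by auto
      define s where "s = (\<Sum>j<N. pmf \<nu> (xh j))"
      have s1: "s \<le> 1" unfolding s_def by (rule sum_pts_le(1)[OF xh_distinct])
      have s0: "s > 0" unfolding s_def using \<nu>p Npos by (intro sum_pos) auto
      define y' where "y' j = pmf \<nu> (xh j) / s" for j
      have "feas N w \<epsilon> y'"
        unfolding feas_def
      proof (intro conjI allI impI)
        show "\<And>j. j < N \<Longrightarrow> 0 < y' j" using \<nu>p s0 by (simp add: y'_def)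
        show "(\<Sum>j<N. y' j) = 1" using s0 by (simp add: y'_def s_def[symmetric] sum_divide_distrib[symmetric])
        have "(\<Sum>j<N. w j * ln (w j / y' j)) = (\<Sum>j<N. w j * ln (w j / pmf \<nu> (xh j)) + w j * ln s)"
        proof (intro sum.cong refl)
          fix j assume "j \<in> {..<N}"
          then have "pmf \<nu> (xh j) > 0" "w j > 0" using \<nu>p w_pos by auto
          then show "w j * ln (w j / y' j) = w j * ln (w j / pmf \<nu> (xh j)) + w j * ln s"
            using s0 by (simp add: y'_def ln_div ln_mult algebra_simps)
        qed
        also have "\<dots> = (\<Sum>j<N. w j * ln (w j / pmf \<nu> (xh j))) + ln s"
          by (simp add: sum.distrib sum_distrib_right[symmetric] w_sum)
        also have "\<dots> \<le> \<epsilon>" using \<nu>F ln_le_zero_iff[of s] s0 s1 by linarith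
        finally show "(\<Sum>j<N. w j * ln (w j / y' j)) \<le> \<epsilon>" .
      qed
      then have "y' k \<le> y k" by (rule ymax)
      moreover have "pmf \<nu> (xh k) \<le> y' k"
        using s0 s1 pmf_nonneg[of \<nu> "xh k"] by (simp add: y'_def le_divide_eq mult_left_le)
      ultimately show "v \<le> y k" using \<nu>(2) k(2) by simp
    qed
    show "\<exists>y. (\<forall>j<N. y j > 0) \<and> (\<Sum>j<N. w j * ln (w j / y j)) \<le> \<epsilon> \<and> (\<Sum>j<N. y j) = 1 \<and>
            (\<Sum>j<N. y j * (if xh j = x then 1 else 0)) = (SUP \<nu>\<in>KL_ball X \<nu>h \<epsilon>. pmf \<nu> x) \<and>
            (\<forall>y'. (\<forall>j<N. y' j > 0) \<and> (\<Sum>j<N. w j * ln (w j / y' j)) \<le> \<epsilon> \<and> (\<Sum>j<N. y' j) = 1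
                 \<longrightarrow> (\<Sum>j<N. y' j * (if xh j = x then 1 else 0)) \<le> (\<Sum>j<N. y j * (if xh j = x then 1 else 0)))"
    proof (intro exI[of _ y] conjI allI impI)
      show "\<And>j. j < N \<Longrightarrow> y j > 0" by (rule yp)
      show "(\<Sum>j<N. w j * ln (w j / y j)) \<le> \<epsilon>" by (rule yF)
      show "(\<Sum>j<N. y j) = 1" by (rule ys)
      show "(\<Sum>j<N. y j * (if xh j = x then 1 else 0)) = (SUP \<nu>\<in>KL_ball X \<nu>h \<epsilon>. pmf \<nu> x)"
        unfolding ind using SUPeq by simp
      fix y' assume h: "(\<forall>j<N. y' j > 0) \<and> (\<Sum>j<N. w j * ln (w j / y' j)) \<le> \<epsilon> \<and> (\<Sum>j<N. y' j) = 1"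
      then have "feas N w \<epsilon> y'" unfolding feas_def by simp
      then show "(\<Sum>j<N. y' j * (if xh j = x then 1 else 0)) \<le> (\<Sum>j<N. y j * (if xh j = x then 1 else 0))"
        unfolding ind by (rule ymax)
    qed
  next
    assume xn: "x \<notin> set_pmf \<nu>h"
    then have xn': "x \<notin> xh ` {..<N}" using sS by simp
    define c where "c = exp (- \<epsilon>)"
    have c: "0 < c" "c \<le> 1" using eps by (auto simp: c_def)
    show "(SUP \<nu>\<in>KL_ball X \<nu>h \<epsilon>. pmf \<nu> x) = 1 - exp (- \<epsilon>)"
      unfolding image_def c_def[symmetric]
    proof (rule cSup_eq_maximum)
      define A where "A = insert x (xh ` {..<N})"
      define q where "q z = (if z = x then 1 - c else c * pmf \<nu>h z)" for z
      have sumS: "(\<Sum>z\<in>xh ` {..<N}. pmf \<nu>h z) = 1"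
        using sum_sel_img[OF xh_distinct, of "pmf \<nu>h"] pw w_sum by simp
      have "\<exists>\<nu>. \<forall>z. pmf \<nu> z = (if z \<in> A then q z else 0)"
      proof (rule finite_pmf_exists)
        show "\<And>z. z \<in> A \<Longrightarrow> 0 \<le> q z" using c by (auto simp: q_def)
        have "sum q A = (1 - c) + (\<Sum>z\<in>xh ` {..<N}. q z)" using xn' by (simp add: A_def q_def)
        also have "(\<Sum>z\<in>xh ` {..<N}. q z) = (\<Sum>z\<in>xh ` {..<N}. c * pmf \<nu>h z)"
          using xn' by (intro sum.cong) (auto simp: q_def)
        also have "\<dots> = c" using sumS by (simp add: sum_distrib_left[symmetric])
        finally show "sum q A = 1" by simp
      qed (simp add: A_def)
      then obtain \<nu>s where \<nu>s: "\<And>z. pmf \<nu>s z = (if z \<in> A then q z else 0)" by blast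
      have pj: "\<And>j. j < N \<Longrightarrow> pmf \<nu>s (xh j) = c * w j"
        using \<nu>s pw xn' by (auto simp: A_def q_def)
      have "set_pmf \<nu>s \<subseteq> X"
      proof
        fix z assume "z \<in> set_pmf \<nu>s"
        then have "pmf \<nu>s z \<noteq> 0" by (simp add: set_pmf_iff)
        then have "z \<in> A" using \<nu>s[of z] by (auto split: if_splits)
        then show "z \<in> X" using xh_in x_in by (auto simp: A_def)
      qed
      moreover have "\<forall>j<N. pmf \<nu>s (xh j) > 0" using pj c w_pos by simp
      moreover have "(\<Sum>j<N. w j * ln (w j / pmf \<nu>s (xh j))) = (\<Sum>j<N. w j * \<epsilon>)"
      proof (intro sum.cong refl)
        fix j assume "j \<in> {..<N}"
        then have "w j > 0" using w_pos by auto
        then show "w j * ln (w j / pmf \<nu>s (xh j)) = w j * \<epsilon>"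
        proof -
          have "w j / pmf \<nu>s (xh j) = 1 / c" using pj \<open>j \<in> {..<N}\<close> c \<open>w j > 0\<close> by simp
          also have "\<dots> = exp \<epsilon>" by (simp add: c_def exp_minus divide_inverse)
          finally show ?thesis by simp
        qed
      qed
      moreover have "(\<Sum>j<N. w j * \<epsilon>) = \<epsilon>" by (simp add: sum_distrib_right[symmetric] w_sum)
      ultimately have "\<nu>s \<in> KL_ball X \<nu>h \<epsilon>" using BI by simp
      moreover have "pmf \<nu>s x = 1 - c" using \<nu>s by (simp add: A_def q_def)
      ultimately show "1 - c \<in> {v. \<exists>\<nu>\<in>KL_ball X \<nu>h \<epsilon>. v = pmf \<nu> x}" by force
      fix v assume "v \<in> {v. \<exists>\<nu>\<in>KL_ball X \<nu>h \<epsilon>. v = pmf \<nu> x}"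
      then obtain \<nu> where \<nu>: "\<nu> \<in> KL_ball X \<nu>h \<epsilon>" "v = pmf \<nu> x" by blast
      have \<nu>p: "\<And>j. j < N \<Longrightarrow> pmf \<nu> (xh j) > 0" and \<nu>F: "(\<Sum>j<N. w j * ln (w j / pmf \<nu> (xh j))) \<le> \<epsilon>"
        using \<nu>(1) BI by auto
      define s where "s = (\<Sum>j<N. pmf \<nu> (xh j))"
      have s0: "s > 0" unfolding s_def using \<nu>p Npos by (intro sum_pos) auto
      have ls: "(\<Sum>j<N. w j) * ln ((\<Sum>j<N. w j) / s) \<le> (\<Sum>j<N. w j * ln (w j / pmf \<nu> (xh j)))"
        unfolding s_def using Npos w_pos \<nu>p by (intro log_sum) auto
      then have "- ln s \<le> \<epsilon>" using \<nu>F w_sum s0 by (simp add: ln_div)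
      then have "c \<le> s" using s0 unfolding c_def
        by (metis exp_le_cancel_iff exp_ln minus_le_iff)
      moreover have "pmf \<nu> x + s \<le> 1" unfolding s_def by (rule sum_pts_le(2)[OF xh_distinct xn'])
      ultimately show "v \<le> 1 - c" using \<nu>(2) by simp
    qed
  qed
qed

end
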